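(* Let $m\geq 17$ and $k\geq 1$ be integers and let $c(x)=1+\sum_{j\in\{1,3,5,6,8\}}(x^j+x^{m-j})\in\mathbb{F}_2[x]$. Then $\gcd(c(x^k),x^m-1)=1$ if and only if $\gcd(m,3k)=\gcd(m,7k)=\gcd(m,k)$.
   Context: All polynomials are over $\mathbb{F}_2$. *)

theory Defs
  imports "HOL-Computational_Algebra.Polynomial_Factorial" "Berlekamp_Zassenhaus.Finite_Field"
begin

text \<open>F_2 is rendered as the AFP prime field type bool mod_ring (CARD(bool) = 2).\<close>
type_synonym F2 = "bool mod_ring"

definition c_poly :: "nat \<Rightarrow> F2 poly" where
  "c_poly m = 1 + (\<Sum>j\<in>{1,3,5,6,8::nat}. monom 1 j + monom 1 (m - j))"

end

theory Submission imports Defs "HOL-Computational_Algebra.Primes" begin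

lemma G1: fixes y :: "'a::comm_ring_1" shows "(y - 1) dvd (y^n - 1)"
  by (simp add: power_diff_1_eq)

lemma G2: fixes x :: "'a::comm_ring_1" assumes "a dvd b" shows "(x^a - 1) dvd (x^b - 1)"
proof -
  obtain t where "b = a * t" using assms by auto
  then have "x^b - 1 = (x^a)^t - 1" by (simp add: power_mult)
  then show ?thesis using G1[of "x^a" t] by simp
qed

lemma G3: fixes x :: "'a::comm_ring_1"
  shows "d dvd x^a - 1 \<Longrightarrow> d dvd x^b - 1 \<Longrightarrow> d dvd x^(gcd a b) - 1"
proof (induction "a + b" arbitrary: a b rule: less_induct)
  case less
  show ?case
  proof (cases "a = 0 \<or> b = 0")
    case True then show ?thesis using less.prems by auto
  next
    case False
    show ?thesis
    proof (cases "b \<le> a")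
      case True
      from True obtain c where ac: "a = b + c" using le_Suc_ex by blast
      have e: "x^c - 1 = (x^a - 1) - x^c * (x^b - 1)"
        unfolding ac by (simp add: power_add algebra_simps)
      have d1: "d dvd x^c - 1"
        unfolding e by (intro dvd_diff less.prems(1) dvd_mult less.prems(2))
      have lt: "c + b < a + b" using False ac by simp
      have "d dvd x^(gcd c b) - 1" by (rule less.hyps[OF lt d1 less.prems(2)])
      moreover have "gcd c b = gcd a b" unfolding ac
        using gcd_add1[of c b] by (simp add: add.commute)
      ultimately show ?thesis by simp
    next
      case F2: False
      from F2 obtain c where bc: "b = a + c" by (metis le_Suc_ex nat_le_linear)
      have e: "x^c - 1 = (x^b - 1) - x^c * (x^a - 1)"
        unfolding bc by (simp add: power_add algebra_simps)
      have d1: "d dvd x^c - 1"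
        unfolding e by (intro dvd_diff less.prems(2) dvd_mult less.prems(1))
      have lt: "a + c < a + b" using False bc by simp
      have "d dvd x^(gcd a c) - 1" by (rule less.hyps[OF lt less.prems(1) d1])
      moreover have "gcd a c = gcd a b" unfolding bc by simp
      ultimately show ?thesis by simp
    qed
  qed
qed

lemma G4: fixes y :: "'a::comm_ring_1"
  shows "(y - 1) dvd (\<Sum>i<p. y^i) - of_nat p"
proof -
  have "(\<Sum>i<p. y^i) - of_nat p = (\<Sum>i<p. y^i - 1)"
    by (simp add: sum_subtractf)
  also have "(y - 1) dvd \<dots>" by (intro dvd_sum) (simp add: G1)
  finally show ?thesis .
qed

lemma two_F2: "(1::F2) + 1 = 0"
proof -
  have "(of_nat CARD(bool) :: F2) = 0" by (rule of_nat_card_eq_0)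
  then show ?thesis by simp
qed

lemma two_F2p: "(1::F2 poly) + 1 = 0"
proof -
  have "(1::F2 poly) + 1 = [:1 + 1:]" by (simp add: one_pCons)
  then show ?thesis using two_F2 by simp
qed

lemma two_F2p': "(2::F2 poly) = 0"
  using two_F2p by (simp add: one_add_one)

lemma coprime_shift:
  fixes a b c q :: "F2 poly"
  assumes "a = b + c * q"
  shows "coprime a c \<longleftrightarrow> coprime b c"
proof
  assume h: "coprime a c"
  show "coprime b c"
  proof (rule coprimeI)
    fix d assume "d dvd b" "d dvd c"
    then have "d dvd a" unfolding assms by (intro dvd_add dvd_mult2)
    then show "is_unit d" using h \<open>d dvd c\<close> coprime_common_divisor by blast
  qed
next
  assume h: "coprime b c"
  show "coprime a c"
  proof (rule coprimeI)
    fix d assume "d dvd a" "d dvd c"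
    have bb: "b = a - c * q" using assms by simp
    have "d dvd b" unfolding bb using \<open>d dvd a\<close> \<open>d dvd c\<close> by (intro dvd_diff dvd_mult2)
    then show "is_unit d" using h \<open>d dvd c\<close> coprime_common_divisor by blast
  qed
qed

lemma coprime_X: "coprime ([:0,1:] :: 'a::field poly) ([:0,1:]^m - 1)" if "m > 0"
proof (rule coprimeI)
  fix d assume d1: "d dvd ([:0,1:] :: 'a poly)" and "d dvd [:0,1:]^m - 1"
  have "([:0,1:] :: 'a poly) dvd [:0,1:]^m" using that by (rule_tac dvd_power) simp
  with d1 have "d dvd [:0,1:]^m" by (rule dvd_trans)
  then have "d dvd [:0,1:]^m - ([:0,1:]^m - 1)" using \<open>d dvd [:0,1:]^m - 1\<close> by (rule dvd_diff)
  then show "is_unit d" by simp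
qed

lemma pcompose_Xpow: "pcompose ([:0,1:]^j) q = q^j"
  by (induction j) (simp_all add: pcompose_mult pcompose_pCons)

abbreviation XX :: "F2 poly" where "XX \<equiv> [:0,1:]"

lemma coeff_Xpow: "coeff (XX^n) j = (if n = j then 1 else 0)"
proof -
  have "XX^n = monom 1 n" by (simp add: monom_altdef)
  then show ?thesis by (simp add: coeff_monom)
qed

lemma K:
  fixes p m k :: nat
  assumes pp: "prime p" and p1: "(of_nat p :: F2 poly) = 1" and m0: "m > 0" and k0: "k > 0"
  shows "coprime (\<Sum>i<p. (XX^k)^i) (XX^m - 1) \<longleftrightarrow> gcd m (p*k) = gcd m k"
proof -
  define Phi where "Phi = (\<lambda>y::F2 poly. \<Sum>i<p. y^i)"
  have geo: "\<And>y. (y - 1) * Phi y = y^p - 1" by (simp add: Phi_def power_diff_1_eq)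
  have phi1: "\<And>y. (y - 1) dvd Phi y - 1" using G4 p1 unfolding Phi_def by metis
  have phidvd: "\<And>y. Phi y dvd y^p - 1" using geo by (metis dvd_triv_right)
  have mainr: "coprime (Phi (XX^k)) (XX^m - 1) \<longleftrightarrow> gcd m (p*k) = gcd m k"
  proof
    assume cop: "coprime (Phi (XX^k)) (XX^m - 1)"
    show "gcd m (p*k) = gcd m k"
    proof (rule ccontr)
      assume ne: "gcd m (p*k) \<noteq> gcd m k"
      define g where "g = gcd m k"
      have g0: "g > 0" using m0 by (simp add: g_def)
      define m' where "m' = m div g"
      define k' where "k' = k div g"
      have mm: "m = g * m'" unfolding m'_def g_def by simp
      have kk: "k = g * k'" unfolding k'_def g_def by simp
      have cop': "coprime m' k'" using div_gcd_coprime[of m k] m0 by (simp add: m'_def k'_def g_def)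
      have pm: "p dvd m'"
      proof (rule ccontr)
        assume "\<not> p dvd m'"
        then have "coprime p m'" using pp by (simp add: prime_imp_coprime)
        then have "coprime m' (p*k')" using cop' by (simp add: coprime_commute)
        then have "gcd m' (p*k') = 1" by simp
        then have "gcd m (p*k) = g" unfolding mm kk
          by (metis gcd_mult_distrib_nat mult.left_commute mult.right_neutral)
        then show False using ne g_def by simp
      qed
      have pk: "\<not> p dvd k'"
      proof
        assume "p dvd k'"
        then have "is_unit p" using pm cop' coprime_common_divisor by blast
        then show False using pp by simp
      qed
      have gpk: "gcd p k' = 1" using pp pk by (simp add: prime_imp_coprime)
      define Z where "Z = XX^g"
      have Y: "XX^k = Z^k'" by (simp add: Z_def kk power_mult)
      have d1: "Phi Z dvd XX^m - 1"
      proof -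
        have "Z^p - 1 = XX^(g*p) - 1" by (simp add: Z_def power_mult)
        moreover have "XX^(g*p) - 1 dvd XX^m - 1" using pm mm by (intro G2) simp
        ultimately show ?thesis using phidvd[of Z] by (metis dvd_trans)
      qed
      have copZ: "coprime (Phi Z) (Z^k' - 1)"
      proof (rule coprimeI)
        fix e assume e1: "e dvd Phi Z" and e2: "e dvd Z^k' - 1"
        have "e dvd Z^p - 1" using e1 phidvd[of Z] by (rule dvd_trans)
        then have "e dvd Z^(gcd p k') - 1" using e2 by (rule G3)
        then have "e dvd Z - 1" using gpk by simp
        then have "e dvd Phi Z - 1" using phi1[of Z] by (rule dvd_trans)
        with e1 have "e dvd Phi Z - (Phi Z - 1)" by (rule dvd_diff)
        then show "is_unit e" by simp
      qed
      have d2: "Phi Z dvd Phi (XX^k)"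
      proof -
        have "Phi Z dvd Z^p - 1" by (rule phidvd)
        also have "Z^p - 1 dvd Z^(p*k') - 1" by (intro G2) simp
        also have "Z^(p*k') - 1 = (Z^k' - 1) * Phi (Z^k')"
          by (simp add: geo power_mult mult.commute[of p k'])
        finally have "Phi Z dvd (Z^k' - 1) * Phi (Z^k')" .
        then have "Phi Z dvd Phi (Z^k')" using copZ coprime_dvd_mult_right_iff by blast
        then show ?thesis using Y by simp
      qed
      have nu: "\<not> is_unit (Phi Z)"
      proof
        assume "is_unit (Phi Z)"
        then obtain c where c: "Phi Z = [:c:]" using is_unit_poly_iff by blast
        have "coeff (Phi Z) g = 0" using c g0 by (cases g) simp_all
        moreover have "coeff (Phi Z) g = 1"
        proof -
          have p2: "1 < p" using prime_gt_1_nat[OF pp] .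
          have "coeff (Phi Z) g = (\<Sum>i<p. if g * i = g then 1 else 0)"
            by (simp add: Phi_def Z_def coeff_sum coeff_Xpow flip: power_mult)
          also have "\<dots> = (\<Sum>i<p. if i = 1 then 1 else 0)"
            using g0 by (intro sum.cong) auto
          also have "\<dots> = 1" using p2 by simp
          finally show ?thesis .
        qed
        ultimately show False by simp
      qed
      show False using not_coprimeI[OF d2 d1 nu] cop by simp
    qed
  next
    assume eq: "gcd m (p*k) = gcd m k"
    show "coprime (Phi (XX^k)) (XX^m - 1)"
    proof (rule coprimeI)
      fix d assume d1: "d dvd Phi (XX^k)" and d2: "d dvd XX^m - 1"
      have "d dvd (XX^k)^p - 1" using d1 phidvd by (rule dvd_trans)
      then have "d dvd XX^(p*k) - 1" by (simp add: power_mult mult.commute)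
      then have "d dvd XX^(gcd (p*k) m) - 1" using d2 by (rule G3)
      then have "d dvd XX^(gcd m k) - 1" using eq by (simp add: gcd.commute)
      moreover have "XX^(gcd m k) - 1 dvd XX^k - 1" by (intro G2) simp
      ultimately have "d dvd XX^k - 1" by (rule dvd_trans)
      then have "d dvd Phi (XX^k) - 1" using phi1 by (rule dvd_trans)
      with d1 have "d dvd Phi (XX^k) - (Phi (XX^k) - 1)" by (rule dvd_diff)
      then show "is_unit d" by simp
    qed
  qed
  then show ?thesis by (simp add: Phi_def)
qed

lemma pc_monom: "pcompose (monom 1 j) q = q^j"
  by (simp add: monom_altdef pcompose_Xpow)

lemma t2:
  fixes Y :: "'a::comm_ring_1"
  shows "(1 + Y + Y^2)^5 * (1+Y+Y^2+Y^3+Y^4+Y^5+Y^6) =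
    (1 + Y^2 + Y^3 + Y^5 + Y^7 + Y^8 + Y^9 + Y^11 + Y^13 + Y^14 + Y^16) + 2 * (3 * Y^1 + 10 * Y^2 + 25 * Y^3 + 48 * Y^4 + 73 * Y^5 + 96 * Y^6 + 110 * Y^7 + 115 * Y^8 + 110 * Y^9 + 96 * Y^10 + 73 * Y^11 + 48 * Y^12 + 25 * Y^13 + 10 * Y^14 + 3 * Y^15)"
  by (simp add: algebra_simps eval_nat_numeral)

lemma identF2:
  fixes Y :: "F2 poly"
  shows "(\<Sum>i<3. Y^i)^5 * (\<Sum>i<7. Y^i) =
    1 + Y^2 + Y^3 + Y^5 + Y^7 + Y^8 + Y^9 + Y^11 + Y^13 + Y^14 + Y^16"
proof -
  have a: "(\<Sum>i<3. Y^i) = 1 + Y + Y^2" by (simp add: eval_nat_numeral)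
  have b: "(\<Sum>i<7. Y^i) = 1+Y+Y^2+Y^3+Y^4+Y^5+Y^6" by (simp add: eval_nat_numeral algebra_simps)
  show ?thesis unfolding a b t2 two_F2p' by simp
qed

lemma three: "(of_nat 3 :: F2 poly) = 1"
proof -
  have "(of_nat 3 :: F2 poly) = 1 + 2" by simp
  then show ?thesis using two_F2p' by simp
qed

lemma seven: "(of_nat 7 :: F2 poly) = 1"
proof -
  have "(of_nat 7 :: F2 poly) = 1 + 2 * 3" by simp
  then show ?thesis using two_F2p' by simp
qed

lemma prime3: "prime (3::nat)"
proof -
  have "{2..<3::nat} = {2}" by auto
  then show ?thesis by (simp add: prime_nat_iff')
qed
lemma prime7: "prime (7::nat)"
proof -
  have "{2..<7::nat} = {2,3,4,5,6}" by auto
  then show ?thesis by (simp add: prime_nat_iff')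
qed

theorem proposition8:
  fixes m k :: nat
  assumes "m \<ge> 17" and "k \<ge> 1"
  shows "gcd (pcompose (c_poly m) (monom 1 k)) (monom 1 m - 1) = 1 \<longleftrightarrow>
         (gcd m (3 * k) = gcd m k \<and> gcd m (7 * k) = gcd m k)"
proof -
  define n where "n = m - 8"
  have mn: "m = n + 8" using assms(1) by (simp add: n_def)
  define Y where "Y = XX^k"
  have mk: "monom 1 k = Y" by (simp add: Y_def monom_altdef)
  have mm: "monom 1 m = XX^m" by (simp add: monom_altdef)
  define C where "C = pcompose (c_poly m) (monom 1 k)"
  define Q where "Q = 1 + Y^2 + Y^3 + Y^5 + Y^7"
  have E: "Y^8 * C = (\<Sum>i<3. Y^i)^5 * (\<Sum>i<7. Y^i) + (Y^m - 1) * Q"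
    unfolding identF2 C_def c_poly_def mk Q_def mn
    by (simp add: pcompose_add pcompose_sum pc_monom power_add eval_nat_numeral algebra_simps)
  obtain R where R: "Y^m - 1 = (XX^m - 1) * R"
  proof -
    have "(XX^m - 1) dvd (XX^m)^k - 1" by (rule G1)
    moreover have "(XX^m)^k = Y^m" by (simp add: Y_def flip: power_mult) (simp add: mult.commute)
    ultimately show ?thesis using that by (auto elim!: dvdE)
  qed
  have E2: "Y^8 * C = (\<Sum>i<3. Y^i)^5 * (\<Sum>i<7. Y^i) + (XX^m - 1) * (R * Q)"
    using E R by (simp add: mult.assoc)
  have m0: "m > 0" and k0: "k > 0" using assms by auto
  have cY: "coprime (Y^8) (XX^m - 1)" unfolding Y_def using coprime_X[where 'a=F2, OF m0]
    by (simp flip: power_mult)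
  have "gcd C (XX^m - 1) = 1 \<longleftrightarrow> coprime C (XX^m - 1)" by (simp add: coprime_iff_gcd_eq_1)
  also have "\<dots> \<longleftrightarrow> coprime (Y^8 * C) (XX^m - 1)" using cY by simp
  also have "\<dots> \<longleftrightarrow> coprime ((\<Sum>i<3. Y^i)^5 * (\<Sum>i<7. Y^i)) (XX^m - 1)"
    using E2 by (rule coprime_shift)
  also have "\<dots> \<longleftrightarrow> coprime (\<Sum>i<3. Y^i) (XX^m - 1) \<and> coprime (\<Sum>i<7. Y^i) (XX^m - 1)"
    by simp
  also have "\<dots> \<longleftrightarrow> gcd m (3 * k) = gcd m k \<and> gcd m (7 * k) = gcd m k"
    unfolding Y_def using K[OF prime3 three m0 k0] K[OF prime7 seven m0 k0] by simp
  finally show ?thesis unfolding C_def mm .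
qed

end
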